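(* In the setting below, the minimizer $\theta_n^*=(\rho_n^*,\lambda_n^* )$ of the population dual loss $L_n(\cdot\,;\sigma^2,B)$ over $\Theta(\ell)$ satisfies, as $n\to\infty$, $$\|\lambda_{n,-1}^*\|_2=O\big(\lambda_{n,1}^*\ell^3+n^{-1}\big).$$ Consequently, for fixed $\delta,\epsilon\in(0,1)$, if $\hat B\ge \varepsilon_0>0$, there is a constant $C$ depending only on $\delta$, $B$ and $\varepsilon_0$ such that $$\sup_{\theta\,\in\,\Theta_n(\ell,\delta,\epsilon)} \big|L_n(\theta;\hat\sigma^2,\hat B)-L_n(\theta;\hat\sigma^2, B)\big|\le C\, \frac{(\lambda_{n,1}^* )^2}{n}\Big|\frac{1}{\hat B}-\frac{1}{B}\Big|,$$ where here $\theta_n^*=\theta_n^*(\hat\sigma^2,B)$ is used in the definition of $\Theta_n(\ell,\delta,\epsilon)$.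
   Context: Regression discontinuity setting with cutoff normalized to $c=0$: i.i.d. pairs $(X_i,Y_i)$, $W_i=\mathbf{1}\{X_i\ge 0\}$, the running variable has a strictly positive density at $0$; only observations with $|X_i|\le\ell$ are used, and $(X,W)$ denotes a generic draw of a retained running variable and its treatment indicator. For $\lambda=(\lambda_1,\dots,\lambda_6)$ write $\lambda_{-1}=(\lambda_2,\dots,\lambda_6)$. Dual parameter space: $\Theta(\ell)=\{(f,\lambda): f:[-\ell,\ell]\to\mathbb{R},\ f(0)=f'(0)=f''(0)=0,\ f''\text{ is }\lambda_1\text{-Lipschitz},\ \lambda\in[0,\infty)\times\mathbb{R}^5\}$. For $\theta=(\rho,\lambda)$ let $G(\theta;x,w)=\rho(x)+\lambda_2 w+\lambda_3(1-w)+\lambda_4 wx+\lambda_5(1-w)x+\lambda_6x^2$. Population dual loss: $L_n(\theta;\sigma^2,B)=\frac{1}{4\sigma^2}\mathbb{E}[G^2(\theta;X,W)]+\frac{\lambda_1^2}{4nB^2}+\frac{\lambda_2-\lambda_3}{n}$, with minimizer $\theta_n^*(\sigma^2,B)=(\rho_n^*,\lambda_n^* )$ over $\Theta(\ell)$. $\hat\sigma^2>0$, $\hat B>0$ are estimates computed independently of the sample and $B>0$ is a fixed constant. Neighborhood: $\Theta_n(\ell,\delta,\epsilon)=\{(\rho,\lambda)\in\Theta(\ell): |\lambda_1-\lambda^*_{n,1}|\le\delta\lambda^*_{n,1},\ \|\lambda_{-1}-\lambda^*_{n,-1}\|_2\le\epsilon\|\lambda^*_{n,-1}\|_2\}$.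 *)

theory Defs
  imports "HOL-Probability.Probability"
begin

text \<open>Parameters theta = (rho, lambda); lambda is a function nat => real whose
  components 1..6 are lambda_1..lambda_6 (all other components are required to be 0).
  The function rho : [-l,l] -> R is represented as a total function that vanishes
  outside [-l,l].\<close>

type_synonym dual_param = "(real \<Rightarrow> real) \<times> (nat \<Rightarrow> real)"

definition treat :: "real \<Rightarrow> real" where
  "treat x = (if x \<ge> 0 then 1 else 0)"

definition Theta :: "real \<Rightarrow> dual_param set" where
  "Theta l = {(f, lam).
     (\<forall>x. \<bar>x\<bar> > l \<longrightarrow> f x = 0) \<and>
     (\<exists>f1 f2.
        (\<forall>x\<in>{-l..l}. (f has_real_derivative f1 x) (at x within {-l..l}) \<and>
                      (f1 has_real_derivative f2 x) (at x within {-l..l})) \<and>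
        f 0 = 0 \<and> f1 0 = 0 \<and> f2 0 = 0 \<and>
        (lam 1)-lipschitz_on {-l..l} f2) \<and>
     lam 1 \<ge> 0 \<and> (\<forall>i. i \<notin> {1..6} \<longrightarrow> lam i = 0)}"

definition Gfun :: "dual_param \<Rightarrow> real \<Rightarrow> real \<Rightarrow> real" where
  "Gfun \<theta> x w = fst \<theta> x + snd \<theta> 2 * w + snd \<theta> 3 * (1 - w) + snd \<theta> 4 * w * x
      + snd \<theta> 5 * (1 - w) * x + snd \<theta> 6 * x\<^sup>2"

text \<open>Population dual loss L_n(theta; sigma^2, B); M is the law of a retained running variable.\<close>
definition dual_loss :: "real measure \<Rightarrow> nat \<Rightarrow> real \<Rightarrow> real \<Rightarrow> dual_param \<Rightarrow> real" where
  "dual_loss M n s2 B \<theta> =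
     (1 / (4 * s2)) * (\<integral>x. (Gfun \<theta> x (treat x))\<^sup>2 \<partial>M)
     + (snd \<theta> 1)\<^sup>2 / (4 * real n * B\<^sup>2) + (snd \<theta> 2 - snd \<theta> 3) / real n"

definition norm_rest :: "(nat \<Rightarrow> real) \<Rightarrow> real" where
  "norm_rest lam = sqrt (\<Sum>i\<in>{2..6}. (lam i)\<^sup>2)"

definition Theta_n :: "real \<Rightarrow> real \<Rightarrow> real \<Rightarrow> (nat \<Rightarrow> real) \<Rightarrow> dual_param set" where
  "Theta_n l \<delta> \<epsilon> lamstar = {(f, lam) \<in> Theta l.
      \<bar>lam 1 - lamstar 1\<bar> \<le> \<delta> * lamstar 1 \<and>
      norm_rest (\<lambda>i. lam i - lamstar i) \<le> \<epsilon> * norm_rest lamstar}"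

definition rd_design :: "real \<Rightarrow> (real \<Rightarrow> real) \<Rightarrow> bool" where
  "rd_design l p \<longleftrightarrow> l > 0 \<and> p \<in> borel_measurable borel \<and> (\<forall>x. p x \<ge> 0) \<and>
     (\<forall>x. \<bar>x\<bar> > l \<longrightarrow> p x = 0) \<and> prob_space (density lborel p) \<and>
     isCont p 0 \<and> p 0 > 0"

definition is_minimizer :: "real measure \<Rightarrow> real \<Rightarrow> nat \<Rightarrow> real \<Rightarrow> real \<Rightarrow> dual_param \<Rightarrow> bool" where
  "is_minimizer M l n s2 B \<theta> \<longleftrightarrow> \<theta> \<in> Theta l \<and> (\<forall>\<theta>'\<in>Theta l. dual_loss M n s2 B \<theta> \<le> dual_loss M n s2 B \<theta>')"

end

theory Submission
  imports Defs
begin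



lemma theta_bound:
  assumes th: "(f, lam) \<in> Theta l" and l: "l > 0"
  shows "\<bar>f x\<bar> \<le> lam 1 * l ^ 3"
proof -
  from th obtain f1 f2 where
    d: "\<forall>x\<in>{-l..l}. (f has_real_derivative f1 x) (at x within {-l..l}) \<and>
                      (f1 has_real_derivative f2 x) (at x within {-l..l})"
    and z: "f 0 = 0" "f1 0 = 0" "f2 0 = 0" and lip: "(lam 1)-lipschitz_on {-l..l} f2"
    and out: "\<forall>x. \<bar>x\<bar> > l \<longrightarrow> f x = 0" and lp: "lam 1 \<ge> 0"
    unfolding Theta_def by auto
  have z0: "0 \<in> {-l..l}" using l by auto
  have b2: "\<bar>f2 y\<bar> \<le> lam 1 * l" if "y \<in> {-l..l}" for y
  proof -
    have "dist (f2 y) (f2 0) \<le> lam 1 * dist y 0" by (rule lipschitz_onD[OF lip that z0])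
    moreover have "dist y 0 \<le> l" using that by (auto simp: dist_real_def)
    ultimately show ?thesis using z lp by (simp add: dist_real_def) (meson mult_left_mono order_trans)
  qed
  have b1: "\<bar>f1 y\<bar> \<le> lam 1 * l * l" if "y \<in> {-l..l}" for y
  proof -
    have "norm (f1 y - f1 0) \<le> (lam 1 * l) * norm (y - 0)"
      by (rule field_differentiable_bound[where S="{-l..l}" and f'=f2])
         (use d b2 that z0 in auto)
    moreover have "norm (y - 0) \<le> l" using that by auto
    moreover have "lam 1 * l * norm (y - 0) \<le> lam 1 * l * l"
      using calculation(2) lp l by (intro mult_left_mono) auto
    ultimately show ?thesis using z by simp
  qed
  show ?thesis
  proof (cases "x \<in> {-l..l}")
    case True
    have "norm (f x - f 0) \<le> (lam 1 * l * l) * norm (x - 0)"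
      by (rule field_differentiable_bound[where S="{-l..l}" and f'=f1])
         (use d b1 True z0 in auto)
    moreover have "norm (x - 0) \<le> l" using True by auto
    moreover have "lam 1 * l * l * norm (x - 0) \<le> lam 1 * l * l * l"
      using calculation(2) lp l by (intro mult_left_mono) auto
    ultimately show ?thesis using z by (simp add: power3_eq_cube)
  next
    case False
    then have "f x = 0" using out by auto
    then show ?thesis using lp l by simp
  qed
qed

lemma theta_meas:
  assumes th: "(f, lam) \<in> Theta l" and l: "l > 0"
  shows "f \<in> borel_measurable borel"
proof -
  from th obtain f1 f2 where
    d: "\<forall>x\<in>{-l..l}. (f has_real_derivative f1 x) (at x within {-l..l})"
    and out: "\<forall>x. \<bar>x\<bar> > l \<longrightarrow> f x = 0"
    unfolding Theta_def by auto
  have "continuous_on {-l..l} f"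
    using d by (auto simp: continuous_on_eq_continuous_within intro: DERIV_continuous)
  then have "(\<lambda>x. indicator {-l..l} x *\<^sub>R f x) \<in> borel_measurable borel"
    by (intro borel_measurable_continuous_on_indicator) auto
  moreover have "(\<lambda>x. indicator {-l..l} x *\<^sub>R f x) = f"
  proof
    fix x show "indicator {-l..l} x *\<^sub>R f x = f x"
      by (cases "\<bar>x\<bar> \<le> l") (use out in \<open>auto simp: indicator_def abs_le_iff\<close>)
  qed
  ultimately show ?thesis by simp
qed

lemma quad0:
  fixes a b c :: real
  shows "(a^2 + b^2 + c^2) / 400 \<le> a^2 + a*b + (b^2 + 2*a*c)/3 + b*c/2 + c^2/5"
proof -
  have "a^2 + a*b + (b^2 + 2*a*c)/3 + b*c/2 + c^2/5 - (a^2 + b^2 + c^2) / 400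
    = 399/400 * (a + 200/399*b + 400/1197*c)^2 + 4267/53200 * (b + 39700/38403*c)^2
      + 54533/138250800 * c^2"
    by (simp add: power2_eq_square field_simps)
  moreover have "0 \<le> 399/400 * (a + 200/399*b + 400/1197*c)^2 + 4267/53200 * (b + 39700/38403*c)^2
      + 54533/138250800 * c^2" by simp
  ultimately show ?thesis by linarith
qed

definition Ppoly :: "real \<Rightarrow> real \<Rightarrow> real \<Rightarrow> real \<Rightarrow> real" where
  "Ppoly a b c r = a^2*r + a*b*r^2 + (b^2+2*a*c)*r^3/3 + b*c*r^4/2 + c^2*r^5/5"

lemma quad_r:
  fixes a b c r :: real
  assumes "0 < r" "r \<le> 1"
  shows "r^5/400 * (a^2 + b^2 + c^2) \<le> Ppoly a b c r"
proof -
  have e: "Ppoly a b c r = r * (a^2 + a*(b*r) + ((b*r)^2 + 2*a*(c*r^2))/3 + (b*r)*(c*r^2)/2 + (c*r^2)^2/5)"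
    unfolding Ppoly_def by (simp add: power2_eq_square field_simps) (simp add: algebra_simps eval_nat_numeral)
  have q: "(a^2 + (b*r)^2 + (c*r^2)^2)/400 \<le> (a^2 + a*(b*r) + ((b*r)^2 + 2*a*(c*r^2))/3 + (b*r)*(c*r^2)/2 + (c*r^2)^2/5)"
    by (rule quad0)
  have r4: "r^4 \<le> 1" using assms by (simp add: power_le_one)
  have r42: "r^4 \<le> r^2" using assms by (simp add: power_decreasing)
  have "r^4 * (a^2 + b^2 + c^2) \<le> a^2 + (b*r)^2 + (c*r^2)^2"
  proof -
    have "r^4*a^2 \<le> a^2" using r4 by (simp add: mult_left_le_one_le)
    moreover have "r^4*b^2 \<le> (b*r)^2" using mult_left_mono[OF r42, of "b^2"] by (simp add: power_mult_distrib mult.commute)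
    moreover have "r^4*c^2 = (c*r^2)^2" by (simp add: power_mult_distrib power_mult[symmetric])
    ultimately show ?thesis by (simp add: algebra_simps)
  qed
  then have "r^5/400 * (a^2 + b^2 + c^2) \<le> r * ((a^2 + (b*r)^2 + (c*r^2)^2)/400)"
  proof -
    have "r^5/400 * (a^2 + b^2 + c^2) = r * (r^4 * (a^2 + b^2 + c^2)) / 400"
      by (simp add: eval_nat_numeral)
    also have "\<dots> \<le> r * (a^2 + (b*r)^2 + (c*r^2)^2) / 400"
      using assms \<open>r^4 * (a^2 + b^2 + c^2) \<le> a^2 + (b*r)^2 + (c*r^2)^2\<close>
      by (intro divide_right_mono mult_left_mono) auto
    finally show ?thesis by simp
  qed
  also have "\<dots> \<le> Ppoly a b c r" using q e assms by (simp add: mult_left_mono)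
  finally show ?thesis .
qed




definition Fpoly :: "real \<Rightarrow> real \<Rightarrow> real \<Rightarrow> real \<Rightarrow> real" where
  "Fpoly a b c x = a^2*x + a*b*x^2 + (b^2+2*a*c)*x^3/3 + b*c*x^4/2 + c^2*x^5/5"

lemma Fpoly_deriv: "(Fpoly a b c has_real_derivative (a + b*x + c*x^2)^2) (at x within S)"
  unfolding Fpoly_def
  by (rule derivative_eq_intros refl | simp)+ (simp add: power2_eq_square eval_nat_numeral algebra_simps)

lemma int_pos:
  assumes "0 \<le> r"
  shows "integral\<^sup>L lborel (\<lambda>x. indicator {0..r} x *\<^sub>R (a + b*x + c*x^2)^2) = Ppoly a b c r"
proof -
  have "integral\<^sup>L lborel (\<lambda>x. indicator {0..r} x *\<^sub>R (a + b*x + c*x^2)^2) = Fpoly a b c r - Fpoly a b c 0"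
    by (rule integral_FTC_atLeastAtMost[OF assms])
       (auto simp: has_real_derivative_iff_has_vector_derivative[symmetric] Fpoly_deriv
             intro!: continuous_intros)
  then show ?thesis by (simp add: Fpoly_def Ppoly_def)
qed

lemma int_neg:
  assumes "0 \<le> r"
  shows "integral\<^sup>L lborel (\<lambda>x. indicator {-r..0} x *\<^sub>R (a + b*x + c*x^2)^2) = Ppoly a (-b) c r"
proof -
  have "integral\<^sup>L lborel (\<lambda>x. indicator {-r..0} x *\<^sub>R (a + b*x + c*x^2)^2) = Fpoly a b c 0 - Fpoly a b c (-r)"
    by (rule integral_FTC_atLeastAtMost)
       (use assms in \<open>auto simp: has_real_derivative_iff_has_vector_derivative[symmetric] Fpoly_deriv
             intro!: continuous_intros\<close>)
  then show ?thesis by (simp add: Fpoly_def Ppoly_def eval_nat_numeral)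
qed

lemma intble_pos: "integrable lborel (\<lambda>x. indicator {u..v} x *\<^sub>R ((a::real) + b*x + c*x^2)^2)"
  using borel_integrable_atLeastAtMost[of u v "\<lambda>x. (a + b*x + c*x^2)^2"]
  by (simp add: mult.commute)




lemma bdd_int:
  fixes g :: "real \<Rightarrow> real"
  assumes "prob_space M" "g \<in> borel_measurable M" "AE x in M. \<bar>g x\<bar> \<le> K"
  shows "integrable M g \<and> \<bar>integral\<^sup>L M g\<bar> \<le> K"
proof -
  interpret prob_space M by fact
  have i: "integrable M g" using assms by (intro integrable_const_bound[where B=K]) auto
  have "\<bar>integral\<^sup>L M g\<bar> \<le> (\<integral>x. \<bar>g x\<bar> \<partial>M)" by simp
  also have "\<dots> \<le> K" using i assms(3) by (intro integral_le_const) auto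
  finally show ?thesis using i by simp
qed

definition hfun :: "(nat \<Rightarrow> real) \<Rightarrow> real \<Rightarrow> real" where
  "hfun lam x = lam 2 * treat x + lam 3 * (1 - treat x) + lam 4 * treat x * x
      + lam 5 * (1 - treat x) * x + lam 6 * x\<^sup>2"

lemma treat_meas[measurable]: "treat \<in> borel_measurable borel"
proof -
  have "treat = (\<lambda>x. if x \<ge> 0 then 1 else 0)" by (simp add: treat_def fun_eq_iff)
  moreover have "(\<lambda>x::real. if x \<ge> 0 then 1 else (0::real)) \<in> borel_measurable borel" by measurable
  ultimately show ?thesis by simp
qed

lemma hfun_meas[measurable]: "hfun lam \<in> borel_measurable borel"
  unfolding hfun_def by measurable

lemma hfun_pos: "x \<ge> 0 \<Longrightarrow> hfun lam x = lam 2 + lam 4 * x + lam 6 * x^2"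
  by (simp add: hfun_def treat_def)
lemma hfun_neg: "x < 0 \<Longrightarrow> hfun lam x = lam 3 + lam 5 * x + lam 6 * x^2"
  by (simp add: hfun_def treat_def)

lemma hfun_bound:
  assumes "\<bar>x\<bar> \<le> l"
  shows "\<bar>hfun lam x\<bar> \<le> (\<bar>lam 2\<bar> + \<bar>lam 3\<bar> + \<bar>lam 4\<bar> + \<bar>lam 5\<bar> + \<bar>lam 6\<bar>) * (1 + l + l^2)"
proof -
  have x2: "x^2 \<le> l^2" using assms power_mono[of "\<bar>x\<bar>" l 2] by simp
  have a: "\<bar>lam i * x\<bar> \<le> \<bar>lam i\<bar> * l" for i
    using assms by (simp add: abs_mult mult_left_mono)
  have b: "\<bar>lam i * x^2\<bar> \<le> \<bar>lam i\<bar> * l^2" for i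
    using x2 by (simp add: abs_mult mult_left_mono)
  have l0: "0 \<le> l" using assms by simp
  have "\<bar>hfun lam x\<bar> \<le> \<bar>lam 2\<bar> + \<bar>lam 3\<bar> + (\<bar>lam 4\<bar> + \<bar>lam 5\<bar>) * l + \<bar>lam 6\<bar> * l^2"
  proof (cases "x \<ge> 0")
    case True
    then show ?thesis using a[of 4] b[of 6] l0 by (simp add: hfun_pos algebra_simps)
      (smt (verit) abs_ge_zero mult_nonneg_nonneg)
  next
    case False
    then show ?thesis using a[of 5] b[of 6] l0 by (simp add: hfun_neg algebra_simps)
      (smt (verit) abs_ge_zero mult_nonneg_nonneg)
  qed
  also have "\<dots> \<le> (\<bar>lam 2\<bar> + \<bar>lam 3\<bar> + \<bar>lam 4\<bar> + \<bar>lam 5\<bar> + \<bar>lam 6\<bar>) * (1 + l + l^2)"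
    using l0 by (simp add: algebra_simps)
  finally show ?thesis .
qed

lemma Gfun_split: "Gfun (f, lam) x (treat x) = f x + hfun lam x"
  by (simp add: Gfun_def hfun_def)




lemma sum26: "(\<Sum>i\<in>{2..6::nat}. g i) = g 2 + g 3 + g 4 + g 5 + (g 6::real)"
  by (simp add: eval_nat_numeral atLeastAtMostSuc_conv)

lemma part1_n:
  assumes rd: "rd_design l p" and s2: "s2 > 0" and n: "n \<ge> 1"
    and mn: "is_minimizer (density lborel p) l n s2 B (f, lam)"
    and r: "0 < r" "r \<le> 1" and p0: "p0 > 0" and pr: "\<forall>x. \<bar>x\<bar> \<le> r \<longrightarrow> p0/2 \<le> p x"
  shows "norm_rest lam \<le> ((10*(1+l+l^2) + 20* s2) / (p0/2 * (r^5/400))) * (lam 1 * l^3 + 1/real n)"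
proof -
  define M where "M = density lborel p"
  have l: "l > 0" and pm[measurable]: "p \<in> borel_measurable borel" and pnn: "\<And>x. p x \<ge> 0"
    and pout: "\<And>x. \<bar>x\<bar> > l \<Longrightarrow> p x = 0" and ps: "prob_space M"
    using rd unfolding rd_design_def M_def by auto
  have th: "(f, lam) \<in> Theta l" and mn': "\<And>\<theta>'. \<theta>' \<in> Theta l \<Longrightarrow> dual_loss M n s2 B (f, lam) \<le> dual_loss M n s2 B \<theta>'"
    using mn unfolding is_minimizer_def M_def by auto
  have lp: "lam 1 \<ge> 0" using th unfolding Theta_def by auto
  define lam0 where "lam0 = (\<lambda>i. if i = (1::nat) then lam 1 else 0)"
  have th0: "(f, lam0) \<in> Theta l" using th unfolding Theta_def lam0_def by auto
  have fm[measurable]: "f \<in> borel_measurable borel" using theta_meas[OF th l] .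
  define h where "h = hfun lam"
  have hm[measurable]: "h \<in> borel_measurable borel" unfolding h_def by simp
  define Fb where "Fb = lam 1 * l^3"
  define E where "E = 1 + l + l^2"
  define T where "T = \<bar>lam 2\<bar> + \<bar>lam 3\<bar> + \<bar>lam 4\<bar> + \<bar>lam 5\<bar> + \<bar>lam 6\<bar>"
  have Fb0: "Fb \<ge> 0" and E0: "E \<ge> 0" and T0: "T \<ge> 0" using lp l unfolding Fb_def E_def T_def by auto
  have fb: "\<bar>f x\<bar> \<le> Fb" for x unfolding Fb_def using theta_bound[OF th l] .
  have pe: "\<bar>x\<bar> \<le> l" if "0 < ennreal (p x)" for x
    using that pout[of x] by (metis ennreal_0 less_irrefl not_le)
  have ae: "AE x in M. \<bar>x\<bar> \<le> l"
    unfolding M_def by (subst AE_density) (auto intro!: AE_I2 pe)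
  have hb: "AE x in M. \<bar>h x\<bar> \<le> T * E"
    using ae by eventually_elim (simp add: h_def T_def E_def hfun_bound)
  have mM: "g \<in> borel_measurable M" if "g \<in> borel_measurable borel" for g :: "real \<Rightarrow> real"
    using that unfolding M_def by simp
  have i1: "integrable M (\<lambda>x. (f x)^2)"
  proof -
    have "AE x in M. \<bar>(f x)^2\<bar> \<le> Fb^2"
      using fb by (intro AE_I2) (simp, metis abs_ge_zero power2_abs power_mono)
    then show ?thesis using bdd_int[OF ps mM] by auto
  qed
  have "AE x in M. \<bar>f x * h x\<bar> \<le> Fb * (T * E)"
    using hb by eventually_elim (simp add: abs_mult mult_mono fb Fb0)
  then have i2: "integrable M (\<lambda>x. f x * h x)" and b2: "\<bar>\<integral>x. f x * h x \<partial>M\<bar> \<le> Fb * (T * E)"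
    using bdd_int[OF ps mM] by auto
  have "AE x in M. \<bar>(h x)^2\<bar> \<le> (T * E)^2"
    using hb by eventually_elim (simp, metis abs_ge_zero power2_abs power_mono)
  then have i3: "integrable M (\<lambda>x. (h x)^2)" using bdd_int[OF ps mM] by auto
  define X where "X = (\<integral>x. (f x)^2 \<partial>M)"
  define Y where "Y = (\<integral>x. f x * h x \<partial>M)"
  define Z where "Z = (\<integral>x. (h x)^2 \<partial>M)"
  have "(\<integral>x. (f x + h x)^2 \<partial>M) = (\<integral>x. (f x)^2 + (2 * (f x * h x) + (h x)^2) \<partial>M)"
    by (rule Bochner_Integration.integral_cong) (auto simp: power2_eq_square algebra_simps)
  also have "\<dots> = X + 2 * Y + Z"
    using i1 i2 i3 unfolding X_def Y_def Z_def by simp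
  finally have split: "(\<integral>x. (f x + h x)^2 \<partial>M) = X + 2 * Y + Z" .
  have "dual_loss M n s2 B (f, lam) \<le> dual_loss M n s2 B (f, lam0)" using mn' th0 .
  then have "(1 / (4 * s2)) * (X + 2*Y + Z) + (lam 1)\<^sup>2 / (4 * real n * B\<^sup>2) + (lam 2 - lam 3) / real n
      \<le> (1 / (4 * s2)) * X + (lam 1)\<^sup>2 / (4 * real n * B\<^sup>2)"
  proof -
    have e1: "(\<lambda>x. (Gfun (f, lam) x (treat x))\<^sup>2) = (\<lambda>x. (f x + h x)^2)"
      by (simp add: Gfun_split h_def)
    have e2: "(\<lambda>x. (Gfun (f, lam0) x (treat x))\<^sup>2) = (\<lambda>x. (f x)^2)"
      by (simp add: Gfun_def lam0_def)
    show ?thesis using \<open>dual_loss M n s2 B (f, lam) \<le> dual_loss M n s2 B (f, lam0)\<close>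
      unfolding dual_loss_def snd_conv e1 e2 split X_def[symmetric] by (simp add: lam0_def)
  qed
  then have "(1 / (4 * s2)) * (2*Y + Z) \<le> - ((lam 2 - lam 3) / real n)"
    by (simp add: algebra_simps)
  then have "4 * s2 * ((1 / (4 * s2)) * (2*Y + Z)) \<le> 4 * s2 * (- ((lam 2 - lam 3) / real n))"
    using s2 by (intro mult_left_mono) auto
  then have "2*Y + Z \<le> - 4 * s2 * ((lam 2 - lam 3) / real n)"
    using s2 by simp
  then have Zup: "Z \<le> 2 * (Fb * (T * E)) + 4 * s2 * (T / real n)"
  proof -
    assume a: "2*Y + Z \<le> - 4 * s2 * ((lam 2 - lam 3) / real n)"
    have "- ((lam 2 - lam 3) / real n) \<le> T / real n"
    proof -
      have "- (lam 2 - lam 3) \<le> T" unfolding T_def by simp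
      then have "- (lam 2 - lam 3) / real n \<le> T / real n" by (rule divide_right_mono) simp
      then show ?thesis by (simp add: minus_divide_left)
    qed
    then have "- 4 * s2 * ((lam 2 - lam 3) / real n) \<le> 4 * s2 * (T / real n)"
    proof -
      have "4 * s2 * (- ((lam 2 - lam 3) / real n)) \<le> 4 * s2 * (T / real n)"
        using s2 \<open>- ((lam 2 - lam 3) / real n) \<le> T / real n\<close> by (intro mult_left_mono) auto
      then show ?thesis by simp
    qed
    moreover have "- 2 * Y \<le> 2 * (Fb * (T * E))" using b2 unfolding Y_def by linarith
    ultimately show ?thesis using a by linarith
  qed
  define S where "S = lam 2^2 + lam 3^2 + lam 4^2 + lam 5^2 + lam 6^2"
  define c where "c = p0/2 * (r^5/400)"
  have c0: "c > 0" using p0 r unfolding c_def by simp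
  have Zlow: "c * S \<le> Z"
  proof -
    have Zd: "Z = (\<integral>x. p x * (h x)^2 \<partial>lborel)"
      unfolding Z_def M_def by (subst integral_density) (auto simp: pnn)
    have ip: "integrable lborel (\<lambda>x. p x * (h x)^2)"
      using i3 unfolding M_def by (subst (asm) integrable_density) (auto simp: pnn)
    define g where "g x = p0/2 * (indicator {0..r} x *\<^sub>R (lam 2 + lam 4 * x + lam 6 * x^2)^2
        + indicator {-r..0} x *\<^sub>R (lam 3 + lam 5 * x + lam 6 * x^2)^2)" for x
    have "AE x in lborel. g x \<le> p x * (h x)^2"
      using AE_lborel_singleton[of "0::real"]
    proof eventually_elim
      case (elim x)
      show ?case
      proof (cases "x > 0")
        case True
        then have hx: "h x = lam 2 + lam 4 * x + lam 6 * x^2" unfolding h_def by (simp add: hfun_pos)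
        show ?thesis
        proof (cases "x \<le> r")
          case True
          then have "p0/2 \<le> p x" using pr \<open>x > 0\<close> by auto
          then have "p0/2 * (lam 2 + lam 4 * x + lam 6 * x^2)^2 \<le> p x * (lam 2 + lam 4 * x + lam 6 * x^2)^2"
            by (rule mult_right_mono) auto
          then show ?thesis using \<open>x > 0\<close> True unfolding g_def hx by simp
        next
          case False then show ?thesis using \<open>x > 0\<close> unfolding g_def by (simp add: pnn)
        qed
      next
        case False
        then have x0: "x < 0" using elim by simp
        then have hx: "h x = lam 3 + lam 5 * x + lam 6 * x^2" unfolding h_def by (simp add: hfun_neg)
        show ?thesis
        proof (cases "-r \<le> x")
          case True
          then have "p0/2 \<le> p x" using pr x0 by auto
          then have "p0/2 * (lam 3 + lam 5 * x + lam 6 * x^2)^2 \<le> p x * (lam 3 + lam 5 * x + lam 6 * x^2)^2"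
            by (rule mult_right_mono) auto
          then show ?thesis using x0 True unfolding g_def hx by simp
        next
          case False then show ?thesis using x0 unfolding g_def by (simp add: pnn)
        qed
      qed
    qed
    then have "(\<integral>x. g x \<partial>lborel) \<le> Z"
      unfolding Zd by (intro integral_mono_AE' ip) (auto simp: pnn)
    moreover have "(\<integral>x. g x \<partial>lborel) = p0/2 * (Ppoly (lam 2) (lam 4) (lam 6) r + Ppoly (lam 3) (- lam 5) (lam 6) r)"
    proof -
      have "(\<integral>x. g x \<partial>lborel) = p0/2 * ((\<integral>x. indicator {0..r} x *\<^sub>R (lam 2 + lam 4 * x + lam 6 * x^2)^2 \<partial>lborel)
         + (\<integral>x. indicator {-r..0} x *\<^sub>R (lam 3 + lam 5 * x + lam 6 * x^2)^2 \<partial>lborel))"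
        unfolding g_def by (simp only: integral_mult_right_zero Bochner_Integration.integral_add[OF intble_pos intble_pos])
      also have "\<dots> = p0/2 * (Ppoly (lam 2) (lam 4) (lam 6) r + Ppoly (lam 3) (- lam 5) (lam 6) r)"
        using r by (simp only: int_pos int_neg less_imp_le)
      finally show ?thesis .
    qed
    moreover have "r^5/400 * S \<le> Ppoly (lam 2) (lam 4) (lam 6) r + Ppoly (lam 3) (- lam 5) (lam 6) r"
    proof -
      have "r^5/400 * (lam 2^2 + lam 4^2 + lam 6^2) \<le> Ppoly (lam 2) (lam 4) (lam 6) r"
        using quad_r r by blast
      moreover have "r^5/400 * (lam 3^2 + (- lam 5)^2 + lam 6^2) \<le> Ppoly (lam 3) (- lam 5) (lam 6) r"
        using quad_r r by blast
      moreover have "r^5/400 * S \<le> r^5/400 * (lam 2^2 + lam 4^2 + lam 6^2) + r^5/400 * (lam 3^2 + (- lam 5)^2 + lam 6^2)"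
        unfolding S_def using r by (simp add: algebra_simps)
      ultimately show ?thesis by linarith
    qed
    then have "p0/2 * (r^5/400 * S) \<le> p0/2 * (Ppoly (lam 2) (lam 4) (lam 6) r + Ppoly (lam 3) (- lam 5) (lam 6) r)"
      using p0 by (intro mult_left_mono) auto
    ultimately have "p0/2 * (r^5/400 * S) \<le> Z" by linarith
    then show ?thesis unfolding c_def by (simp add: mult.assoc)
  qed
  define R where "R = norm_rest lam"
  have RS: "R = sqrt S" unfolding R_def norm_rest_def S_def sum26 by simp
  have S0: "S \<ge> 0" unfolding S_def by simp
  have R0: "R \<ge> 0" unfolding RS using S0 by simp
  have R2: "R^2 = S" unfolding RS using S0 by simp
  have li: "\<bar>lam i\<bar> \<le> R" if "i \<in> {2,3,4,5,6}" for i
  proof -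
    have "lam i^2 \<le> S" using that unfolding S_def by auto
    then have "sqrt (lam i^2) \<le> sqrt S" by (rule real_sqrt_le_mono)
    then show ?thesis unfolding RS by simp
  qed
  have TR: "T \<le> 5 * R" unfolding T_def using li[of 2] li[of 3] li[of 4] li[of 5] li[of 6] by simp
  define W where "W = 2 * Fb * E + 4 * s2 / real n"
  have W0: "W \<ge> 0" unfolding W_def using Fb0 E0 s2 by simp
  have WT: "W * T = 2 * (Fb * (T * E)) + 4 * s2 * (T / real n)"
    unfolding W_def by (simp add: algebra_simps)
  have "c * R^2 \<le> W * T" using Zlow Zup unfolding R2 WT by linarith
  also have "\<dots> \<le> W * (5 * R)" using TR W0 by (rule mult_left_mono)
  finally have cR: "c * R^2 \<le> 5 * W * R" by simp
  have Rle: "R \<le> 5 * W / c"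
  proof (cases "R = 0")
    case True then show ?thesis using W0 c0 by simp
  next
    case False
    then have "R > 0" using R0 by simp
    then have "c * R \<le> 5 * W" using cR by (simp add: power2_eq_square)
    then show ?thesis using c0 by (simp add: pos_le_divide_eq mult.commute)
  qed
  define a where "a = lam 1 * l^3"
  define b where "b = 1 / real n"
  have a0: "a \<ge> 0" unfolding a_def using lp l by simp
  have b0: "b \<ge> 0" unfolding b_def by simp
  have "5 * W = 10 * E * a + 20 * s2 * b"
    unfolding W_def Fb_def a_def b_def by (simp add: algebra_simps)
  also have "\<dots> \<le> (10 * E + 20 * s2) * (a + b)"
  proof -
    have "0 \<le> 10 * E * b + 20 * s2 * a" using E0 s2 a0 b0 by simp
    moreover have "(10 * E + 20 * s2) * (a + b) = 10 * E * a + 20 * s2 * b + (10 * E * b + 20 * s2 * a)"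
      by (simp add: algebra_simps)
    ultimately show ?thesis by linarith
  qed
  finally have "5 * W / c \<le> (10 * E + 20 * s2) * (a + b) / c"
    using c0 by (intro divide_right_mono) auto
  then have "R \<le> ((10 * E + 20 * s2) / c) * (a + b)" using Rle by simp
  then show ?thesis unfolding R_def c_def E_def a_def b_def .
qed




lemma pick_r:
  fixes p :: "real \<Rightarrow> real"
  assumes "isCont p 0" "p 0 > (0::real)"
  obtains r where "0 < r" "r \<le> 1" "\<forall>x. \<bar>x\<bar> \<le> r \<longrightarrow> p 0 / 2 \<le> p x"
proof -
  from assms(1) have "\<forall>e>0. \<exists>s>0. \<forall>x. x \<noteq> 0 \<and> norm (x - 0) < s \<longrightarrow> norm (p x - p 0) < e"
    unfolding isCont_def LIM_eq by simp
  then obtain s where s: "s > 0" "\<forall>x. x \<noteq> 0 \<and> \<bar>x\<bar> < s \<longrightarrow> \<bar>p x - p 0\<bar> < p 0 / 2"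
    using assms(2) by (metis half_gt_zero real_norm_def diff_zero)
  define r where "r = min (s/2) 1"
  have "\<forall>x. \<bar>x\<bar> \<le> r \<longrightarrow> p 0 / 2 \<le> p x"
  proof (intro allI impI)
    fix x assume "\<bar>x\<bar> \<le> r"
    then have "\<bar>x\<bar> < s" using s unfolding r_def by auto
    show "p 0 / 2 \<le> p x"
    proof (cases "x = 0")
      case False
      then have "\<bar>p x - p 0\<bar> < p 0 / 2" using s(2) \<open>\<bar>x\<bar> < s\<close> by blast
      then show ?thesis unfolding abs_less_iff by linarith
    qed (use assms(2) in simp)
  qed
  moreover have "0 < r" "r \<le> 1" using s unfolding r_def by auto
  ultimately show ?thesis using that by blast
qed

lemma part2_bound:
  fixes L1 L1s Bh B e0 d :: real and n :: nat
  assumes "0 \<le> L1" "0 \<le> L1s" "\<bar>L1 - L1s\<bar> \<le> d * L1s" "d < 1" "B > 0" "e0 > 0" "Bh \<ge> e0" "n \<ge> 1"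
  shows "\<bar>L1\<^sup>2 / (4 * real n * Bh\<^sup>2) - L1\<^sup>2 / (4 * real n * B\<^sup>2)\<bar>
          \<le> (1/e0 + 1/B) * (L1s\<^sup>2 / real n) * \<bar>1 / Bh - 1 / B\<bar>"
proof -
  define u where "u = 1 / Bh"
  define v where "v = 1 / B"
  have Bh0: "Bh > 0" using assms by simp
  have u0: "u > 0" "u \<le> 1/e0" using assms Bh0 unfolding u_def by (auto simp: frac_le)
  have v0: "v > 0" using assms unfolding v_def by simp
  have "d * L1s \<le> 1 * L1s" using assms by (intro mult_right_mono) auto
  then have L: "L1 \<le> 2 * L1s" using assms(3) by (simp add: abs_le_iff)
  have L2: "L1\<^sup>2 \<le> 4 * L1s\<^sup>2"
  proof -
    have "L1\<^sup>2 \<le> (2 * L1s)\<^sup>2" using L assms(1) by (rule power_mono)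
    then show ?thesis by (simp add: power_mult_distrib)
  qed
  have e: "L1\<^sup>2 / (4 * real n * Bh\<^sup>2) - L1\<^sup>2 / (4 * real n * B\<^sup>2) = L1\<^sup>2 / (4 * real n) * ((u - v) * (u + v))"
  proof -
    have n0: "real n > 0" using assms by simp
    have a: "L1\<^sup>2 / (4 * real n * Bh\<^sup>2) = L1\<^sup>2 / (4 * real n) * u^2"
      unfolding u_def using Bh0 n0 by (simp add: field_simps)
    have b: "L1\<^sup>2 / (4 * real n * B\<^sup>2) = L1\<^sup>2 / (4 * real n) * v^2"
      unfolding v_def using assms n0 by (simp add: field_simps)
    have c: "(u - v) * (u + v) = u^2 - v^2" by (simp add: algebra_simps power2_eq_square)
    show ?thesis unfolding a b c by (simp add: right_diff_distrib)
  qed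
  have "\<bar>L1\<^sup>2 / (4 * real n) * ((u - v) * (u + v))\<bar> = L1\<^sup>2 / (4 * real n) * (\<bar>u - v\<bar> * (u + v))"
    using u0 v0 by (simp add: abs_mult)
  also have "\<dots> \<le> (4 * L1s\<^sup>2) / (4 * real n) * (\<bar>u - v\<bar> * (1/e0 + v))"
    using u0 v0 L2 by (intro mult_mono divide_right_mono) auto
  also have "\<dots> = (1/e0 + 1/B) * (L1s\<^sup>2 / real n) * \<bar>1 / Bh - 1 / B\<bar>"
    unfolding u_def v_def by (simp add: field_simps)
  finally show ?thesis using e by simp
qed

theorem lemma5:
  shows "(\<forall>l p s2 B (\<theta>s :: nat \<Rightarrow> dual_param).
            rd_design l p \<longrightarrow> s2 > 0 \<longrightarrow> B > 0 \<longrightarrow>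
            (\<forall>n\<ge>1. is_minimizer (density lborel p) l n s2 B (\<theta>s n)) \<longrightarrow>
            (\<exists>K N. \<forall>n\<ge>N. norm_rest (snd (\<theta>s n)) \<le> K * (snd (\<theta>s n) 1 * l ^ 3 + 1 / real n)))
       \<and> (\<forall>\<delta> B \<epsilon>0. 0 < \<delta> \<longrightarrow> \<delta> < 1 \<longrightarrow> B > 0 \<longrightarrow> \<epsilon>0 > 0 \<longrightarrow>
            (\<exists>C. \<forall>\<epsilon> l p n s2h Bh \<theta>s. 0 < \<epsilon> \<longrightarrow> \<epsilon> < 1 \<longrightarrow> rd_design l p \<longrightarrow>
                n \<ge> 1 \<longrightarrow> s2h > 0 \<longrightarrow> Bh \<ge> \<epsilon>0 \<longrightarrow>
                is_minimizer (density lborel p) l n s2h B \<theta>s \<longrightarrow>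
                (\<forall>\<theta>\<in>Theta_n l \<delta> \<epsilon> (snd \<theta>s).
                   \<bar>dual_loss (density lborel p) n s2h Bh \<theta> - dual_loss (density lborel p) n s2h B \<theta>\<bar>
                   \<le> C * ((snd \<theta>s 1)\<^sup>2 / real n) * \<bar>1 / Bh - 1 / B\<bar>)))"
proof (intro conjI allI impI)
  fix l p s2 B and \<theta>s :: "nat \<Rightarrow> dual_param"
  assume rd: "rd_design l p" and s2: "s2 > 0" and B: "B > 0"
    and mn: "\<forall>n\<ge>1. is_minimizer (density lborel p) l n s2 B (\<theta>s n)"
  have "isCont p 0" "p 0 > 0" using rd unfolding rd_design_def by auto
  then obtain r where r: "0 < r" "r \<le> 1" "\<forall>x. \<bar>x\<bar> \<le> r \<longrightarrow> p 0 / 2 \<le> p x" by (rule pick_r)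
  show "\<exists>K N. \<forall>n\<ge>N. norm_rest (snd (\<theta>s n)) \<le> K * (snd (\<theta>s n) 1 * l ^ 3 + 1 / real n)"
  proof (intro exI allI impI)
    fix n :: nat assume n: "n \<ge> 1"
    obtain f lam where e: "\<theta>s n = (f, lam)" by fastforce
    have "is_minimizer (density lborel p) l n s2 B (f, lam)" using mn n e by metis
    from part1_n[OF rd s2 n this r(1,2) \<open>p 0 > 0\<close> r(3)]
    show "norm_rest (snd (\<theta>s n)) \<le> ((10*(1+l+l^2) + 20 * s2) / (p 0/2 * (r^5/400))) * (snd (\<theta>s n) 1 * l ^ 3 + 1 / real n)"
      using e by simp
  qed
next
  fix \<delta> B \<epsilon>0 :: real
  assume d: "0 < \<delta>" "\<delta> < 1" and B: "B > 0" and e0: "\<epsilon>0 > 0"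
  show "\<exists>C. \<forall>\<epsilon> l p n s2h Bh \<theta>s. 0 < \<epsilon> \<longrightarrow> \<epsilon> < 1 \<longrightarrow> rd_design l p \<longrightarrow>
                n \<ge> 1 \<longrightarrow> s2h > 0 \<longrightarrow> Bh \<ge> \<epsilon>0 \<longrightarrow>
                is_minimizer (density lborel p) l n s2h B \<theta>s \<longrightarrow>
                (\<forall>\<theta>\<in>Theta_n l \<delta> \<epsilon> (snd \<theta>s).
                   \<bar>dual_loss (density lborel p) n s2h Bh \<theta> - dual_loss (density lborel p) n s2h B \<theta>\<bar>
                   \<le> C * ((snd \<theta>s 1)\<^sup>2 / real n) * \<bar>1 / Bh - 1 / B\<bar>)"
  proof (intro exI allI impI ballI)
    fix \<epsilon> l p and n :: nat and s2h Bh and \<theta>s :: dual_param and \<theta>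
    assume n: "n \<ge> 1" and Bh: "Bh \<ge> \<epsilon>0" and mn: "is_minimizer (density lborel p) l n s2h B \<theta>s"
      and th: "\<theta> \<in> Theta_n l \<delta> \<epsilon> (snd \<theta>s)"
    obtain f lam where te: "\<theta> = (f, lam)" by fastforce
    have "\<theta>s \<in> Theta l" using mn unfolding is_minimizer_def by simp
    then have ls0: "snd \<theta>s 1 \<ge> 0" unfolding Theta_def by auto
    have l0: "lam 1 \<ge> 0" and ld: "\<bar>lam 1 - snd \<theta>s 1\<bar> \<le> \<delta> * snd \<theta>s 1"
      using th unfolding te Theta_n_def Theta_def by auto
    have "\<bar>dual_loss (density lborel p) n s2h Bh \<theta> - dual_loss (density lborel p) n s2h B \<theta>\<bar>
        = \<bar>(lam 1)\<^sup>2 / (4 * real n * Bh\<^sup>2) - (lam 1)\<^sup>2 / (4 * real n * B\<^sup>2)\<bar>"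
      unfolding dual_loss_def te by simp
    also have "\<dots> \<le> (1/\<epsilon>0 + 1/B) * ((snd \<theta>s 1)\<^sup>2 / real n) * \<bar>1 / Bh - 1 / B\<bar>"
      by (rule part2_bound[OF l0 ls0 ld d(2) B e0 Bh n])
    finally show "\<bar>dual_loss (density lborel p) n s2h Bh \<theta> - dual_loss (density lborel p) n s2h B \<theta>\<bar>
        \<le> (1/\<epsilon>0 + 1/B) * ((snd \<theta>s 1)\<^sup>2 / real n) * \<bar>1 / Bh - 1 / B\<bar>" .
  qed
qed


end
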